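(* Let $\alpha>0$, $\lambda\in(0,1)$, and $N(\alpha,\lambda)=\max\{[\alpha/\lambda]+1,[1/(\lambda\alpha)]+1\}$, where $[x]$ is the greatest integer $\le x$. For every integer $n\ge N(\alpha,\lambda)$, $$\binom{n}{\left[\frac{\alpha(n+1)}{\alpha+1}\right]}\alpha^{\left[\frac{\alpha(n+1)}{\alpha+1}\right]}\le\frac{M(\alpha,\lambda)}{\sqrt{2\pi}}n^{-1/2}(1+\alpha)^n,\qquad\text{where } M(\alpha,\lambda)=\frac{\alpha+1}{\sqrt\alpha}\cdot\frac{1}{1-\lambda}.$$ *)

theory Defs
  imports Complex_Main
begin

definition N_bound :: "real \<Rightarrow> real \<Rightarrow> int" where
  "N_bound \<alpha> lam = max (\<lfloor>\<alpha> / lam\<rfloor> + 1) (\<lfloor>1 / (lam * \<alpha>)\<rfloor> + 1)"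

definition M_const :: "real \<Rightarrow> real \<Rightarrow> real" where
  "M_const \<alpha> lam = (\<alpha> + 1) / sqrt \<alpha> * (1 / (1 - lam))"

end

theory Submission
  imports Defs "HOL-Analysis.Analysis"
begin

lemma one_minus_sq_pos: "0 < 1 + x \<Longrightarrow> 0 < 1 - (x::real) \<Longrightarrow> 0 < 1 - x^2"
proof -
  assume "0 < 1 + x" "0 < 1 - x"
  then have "0 < (1+x)*(1-x)" by simp
  also have "(1+x)*(1-x) = 1 - x^2" by (simp add: algebra_simps power2_eq_square)
  finally show ?thesis .
qed

lemma inv_sum_eq: "0 < 1 + x \<Longrightarrow> 0 < 1 - (x::real) \<Longrightarrow> 1/(1+x) + 1/(1-x) = 2/(1-x^2)"
proof -
  assume a: "0 < 1 + x" "0 < 1 - x"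
  have "(1+x)*(1-x) = 1 - x^2" by (simp add: algebra_simps power2_eq_square)
  moreover have "1/(1+x) + 1/(1-x) = 2/((1+x)*(1-x))" using a by (simp add: field_simps)
  ultimately show ?thesis by simp
qed

lemma ln_artanh_lower:
  fixes t :: real assumes "0 \<le> t" "t < 1"
  shows "2 * t \<le> ln (1 + t) - ln (1 - t)"
proof -
  let ?g = "\<lambda>x::real. ln (1 + x) - ln (1 - x) - 2 * x"
  have "?g 0 \<le> ?g t"
  proof (rule deriv_nonneg_imp_mono[where g = ?g and g' = "\<lambda>x. 1/(1+x) + 1/(1-x) - 2" and a = 0 and b = t])
    fix x assume x: "x \<in> {0..t}"
    then have p: "1 + x > 0" "1 - x > 0" using assms by auto
    show "(?g has_real_derivative 1/(1+x) + 1/(1-x) - 2) (at x)" using p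
      by (auto intro!: derivative_eq_intros)
    have u: "1 - x^2 > 0" "1 - x^2 \<le> 1" using one_minus_sq_pos[OF p] by auto
    have "2 \<le> 2/(1-x^2)" using u by (simp add: field_simps)
    then show "0 \<le> 1/(1+x) + 1/(1-x) - 2" using inv_sum_eq[OF p] by simp
  qed (use assms in auto)
  then show ?thesis by simp
qed

lemma alg_aux: "(u::real) > 0 \<Longrightarrow> x^2 = 1 - u \<Longrightarrow> 2 + (6 * x^2 * (3 * u) - 2 * x^3 * (3 * (- 2 * x))) / (3 * u)^2 - 2/u = 4 * x^4 / (3 * u^2)"
proof -
  assume u: "u > 0" and x: "x^2 = 1 - u"
  have x4: "x^4 = (1-u)^2"
  proof -
    have "x^4 = (x^2)^2" by (simp flip: power_mult)
    then show ?thesis using x by simp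
  qed
  have x3: "2 * x^3 * (3 * (- 2 * x)) = -12 * x^4"
    by (simp add: power3_eq_cube power4_eq_xxxx)
  have "2 + (6 * (1 - u) * (3 * u) - (-12 * (1-u)^2)) / (3 * u)^2 - 2/u = 4 * (1-u)^2 / (3 * u^2)"
    using u by (simp add: divide_simps power2_eq_square) (simp add: algebra_simps)
  then show ?thesis unfolding x3 x4 x .
qed

lemma ln_artanh_upper:
  fixes t :: real assumes "0 \<le> t" "t < 1"
  shows "ln (1 + t) - ln (1 - t) \<le> 2 * t + 2 * t^3 / (3 * (1 - t^2))"
proof -
  let ?g = "\<lambda>x::real. 2 * x + 2 * x^3 / (3 * (1 - x^2)) - (ln (1 + x) - ln (1 - x))"
  let ?d = "\<lambda>x::real. 2 + (6 * x^2 * (3 * (1 - x^2)) - 2 * x^3 * (3 * (- 2 * x))) / (3 * (1 - x^2))^2 - (1/(1+x) + 1/(1-x))"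
  have "?g 0 \<le> ?g t"
  proof (rule deriv_nonneg_imp_mono[where g = ?g and g' = ?d and a = 0 and b = t])
    fix x assume x: "x \<in> {0..t}"
    then have p: "1 + x > 0" "1 - x > 0" using assms by auto
    have q: "1 - x^2 > 0" using one_minus_sq_pos[OF p] .
    show "(?g has_real_derivative ?d x) (at x)"
      using p q by (auto intro!: derivative_eq_intros simp: eval_nat_numeral)
    have "?d x = 4 * x^4 / (3 * (1 - x^2)^2)"
      unfolding inv_sum_eq[OF p] using alg_aux[OF q] by simp
    also have "\<dots> \<ge> 0" by simp
    finally show "0 \<le> ?d x" .
  qed (use assms in auto)
  then show ?thesis by simp
qed


definition sdef :: "nat \<Rightarrow> real" where
  "sdef n = ln (fact n) + real n - (real n + 1/2) * ln (real n)"

lemma sdef_step: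
  assumes "n \<ge> 1"
  shows "sdef n - sdef (Suc n) = (real n + 1/2) * (ln (real n + 1) - ln (real n)) - 1"
proof -
  have "ln (fact (Suc n) :: real) = ln (real n + 1) + ln (fact n)"
    by (simp add: ln_mult add.commute)
  then show ?thesis unfolding sdef_def by (simp add: algebra_simps)
qed

lemma aux_one: "(a::real) \<ge> 0 \<Longrightarrow> 1/(1+a) + a/(1+a) = 1"
  by (simp add: field_simps)

lemma aux_e2: "(x::real) > 0 \<Longrightarrow> 2*(1/(2*x+1))^3/(3*(4*x*(x+1)/(2*x+1)^2)) = 1/(6*x*(x+1)*(2*x+1))"
  by (simp add: divide_simps power2_eq_square power3_eq_cube)

lemma aux_e1: "(x::real) > 0 \<Longrightarrow> 1 - (1/(2*x+1))^2 = 4*x*(x+1)/(2*x+1)^2"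
  by (simp add: divide_simps power2_eq_square) (simp add: algebra_simps)

lemma aux_e3: "(x::real) > 0 \<Longrightarrow> (x+1/2)*(1/(6*x*(x+1)*(2*x+1))) = 1/(12*x) - 1/(12*(x+1))"
  by (simp add: divide_simps) (simp add: algebra_simps)

lemma sdef_diff_bounds:
  assumes "n \<ge> 1"
  shows "0 \<le> sdef n - sdef (Suc n)"
    and "sdef n - sdef (Suc n) \<le> 1 / (12 * real n) - 1 / (12 * (real n + 1))"
proof -
  define t :: real where "t = 1 / (2 * real n + 1)"
  have n1: "real n \<ge> 1" using assms by simp
  have t0: "0 \<le> t" "t < 1" using n1 by (auto simp: t_def field_simps)
  have h1: "1 + t = (real n + 1) / (real n + 1/2)" using n1 by (simp add: t_def field_simps)
  have h2: "1 - t = real n / (real n + 1/2)" using n1 by (simp add: t_def field_simps)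
  have L: "ln (real n + 1) - ln (real n) = ln (1 + t) - ln (1 - t)"
    unfolding h1 h2 using n1 by (simp add: ln_div)
  have ht: "(real n + 1/2) * (2 * t) = 1" using n1 by (simp add: t_def field_simps)
  have "1 \<le> (real n + 1/2) * (ln (real n + 1) - ln (real n))"
  proof -
    have "(real n + 1/2) * (2 * t) \<le> (real n + 1/2) * (ln (1 + t) - ln (1 - t))"
      using ln_artanh_lower[OF t0] n1 by (intro mult_left_mono) auto
    then show ?thesis unfolding L using ht by simp
  qed
  then show "0 \<le> sdef n - sdef (Suc n)" using sdef_step[OF assms] by simp
  have "(real n + 1/2) * (ln (real n + 1) - ln (real n))
      \<le> (real n + 1/2) * (2 * t + 2 * t^3 / (3 * (1 - t^2)))"
    unfolding L using ln_artanh_upper[OF t0] n1 by (intro mult_left_mono) auto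
  also have "\<dots> = 1 + 1 / (12 * real n) - 1 / (12 * (real n + 1))"
  proof -
    have e1: "1 - t^2 = 4 * real n * (real n + 1) / (2 * real n + 1)^2"
      using n1 unfolding t_def by (intro aux_e1) simp
    have e2: "2 * t^3 / (3 * (1 - t^2)) = 1 / (6 * real n * (real n + 1) * (2 * real n + 1))"
      unfolding e1 unfolding t_def using n1 by (intro aux_e2) simp
    have "(real n + 1/2) * (2 * t + 2 * t^3 / (3 * (1 - t^2))) = (real n + 1/2) * (2 * t) + (real n + 1/2) * (2 * t^3 / (3 * (1 - t^2)))"
      by (rule distrib_left)
    also have "\<dots> = 1 + (1/(12*real n) - 1/(12*(real n+1)))" unfolding ht e2 using aux_e3[of "real n"] n1 by (simp only:)
    finally show ?thesis by simp
  qed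
  finally show "sdef n - sdef (Suc n) \<le> 1 / (12 * real n) - 1 / (12 * (real n + 1))"
    using sdef_step[OF assms] by simp
qed


lemma sdef_mono:
  assumes "1 \<le> k" "k \<le> n" shows "sdef n \<le> sdef k"
  using assms(2)
proof (induction n rule: dec_induct)
  case base then show ?case by simp
next
  case (step m)
  have "1 \<le> m" using assms step by simp
  from sdef_diff_bounds(1)[OF this] step.IH show ?case by simp
qed

lemma sdef_lower:
  assumes "1 \<le> n" shows "sdef 1 - 1/12 \<le> sdef n - 1 / (12 * real n)"
  using assms
proof (induction n rule: dec_induct)
  case base then show ?case by simp
next
  case (step m)
  have "1 \<le> m" using step by simp
  from sdef_diff_bounds(2)[OF this] step.IH show ?case by (simp add: algebra_simps)
qed

lemma wallis_step_aux:
  fixes F G P x :: real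
  assumes "F > 0" "G > 0" "P > 0" "x \<ge> 0"
  shows "(P*F)^4/(G^2*(2*x+1)) * (4*(x+1)^2/((2*x+1)*(2*x+3))) = (2*P*((x+1)*F))^4/(((2*x+2)*(2*x+1)*G)^2*(2*(x+1)+1))"
proof -
  have "(2*x+2)^2 = 4*(x+1)^2" by (simp add: power2_eq_square algebra_simps)
  then show ?thesis using assms
    apply (simp add: power_mult_distrib)
    apply (simp add: divide_simps)
    apply (simp add: algebra_simps power2_eq_square power4_eq_xxxx)
    done
qed

lemma wallis_eq:
  "(\<Prod>k=1..n. 4 * real k ^ 2 / (4 * real k ^ 2 - 1)) = (2^n * fact n)^4 / ((fact (2*n))^2 * (2 * real n + 1))"
proof (induction n)
  case 0 then show ?case by simp
next
  case (Suc n)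
  have f2: "(fact (2 * Suc n) :: real) = (2 * real n + 2) * (2 * real n + 1) * fact (2*n)"
    by (simp add: algebra_simps)
  have pos: "(fact (2*n) :: real) > 0" "(2 * real n + 1) > 0" "2 * real n + 3 > 0" by auto
  have d: "4 * (real n + 1) ^ 2 - 1 = (2 * real n + 1) * (2 * real n + 3)"
    by (simp add: algebra_simps power2_eq_square)
  have "(\<Prod>k=1..Suc n. 4 * real k ^ 2 / (4 * real k ^ 2 - 1))
      = (2^n * fact n)^4 / ((fact (2*n))^2 * (2 * real n + 1)) * (4 * (real n + 1) ^ 2 / (4 * (real n + 1) ^ 2 - 1))"
    using Suc by (simp add: add.commute)
  also have "\<dots> = (2^Suc n * fact (Suc n))^4 / ((fact (2*Suc n))^2 * (2 * real (Suc n) + 1))"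
    unfolding d f2 using wallis_step_aux[of "fact n" "fact (2*n)" "2^n" "real n"]
    by (simp add: algebra_simps)
  finally show ?case .
qed


lemma lnW_eq:
  assumes "n \<ge> 1"
  shows "ln ((2^n * fact n)^4 / ((fact (2*n))^2 * (2 * real n + 1)))
     = 4 * sdef n - 2 * sdef (2*n) + ln (real n / (2 * real n + 1)) - ln 2"
proof -
  have n0: "real n > 0" using assms by simp
  have a: "ln ((2^n * fact n)^4 / ((fact (2*n))^2 * (2 * real n + 1)) :: real)
     = 4 * (real n * ln 2 + ln (fact n)) - 2 * ln (fact (2*n)) - ln (2 * real n + 1)"
    by (simp add: ln_div ln_mult ln_realpow)
  have b: "ln (fact n :: real) = sdef n - real n + (real n + 1/2) * ln (real n)"
    unfolding sdef_def by simp
  have c: "ln (fact (2*n) :: real) = sdef (2*n) - 2 * real n + (2 * real n + 1/2) * (ln 2 + ln (real n))"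
    unfolding sdef_def using n0 by (simp add: ln_mult)
  have d: "ln (real n / (2 * real n + 1)) = ln (real n) - ln (2 * real n + 1)"
    using n0 by (simp add: ln_div)
  show ?thesis unfolding a b c d by (simp add: algebra_simps)
qed

lemma sdef_ge:
  assumes "n \<ge> 1" shows "ln (2*pi) / 2 \<le> sdef n"
proof -
  have dec: "decseq (\<lambda>n. sdef (Suc n))"
    by (rule decseq_SucI) (use sdef_diff_bounds(1) in simp)
  have bnd: "\<forall>i. sdef 1 - 1/12 \<le> sdef (Suc i)"
  proof
    fix i
    have "0 \<le> 1 / (12 * real (Suc i))" by simp
    then show "sdef 1 - 1/12 \<le> sdef (Suc i)" using sdef_lower[of "Suc i"] by linarith
  qed
  obtain L where L: "(\<lambda>n. sdef (Suc n)) \<longlonglongrightarrow> L" "\<forall>i. L \<le> sdef (Suc i)"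
    using decseq_convergent[OF dec bnd] by blast
  have Ls: "sdef \<longlonglongrightarrow> L" using LIMSEQ_imp_Suc[OF L(1)] .
  have sm: "strict_mono (\<lambda>n::nat. 2*n)" by (simp add: strict_mono_def)
  have L2: "(\<lambda>n. sdef (2*n)) \<longlonglongrightarrow> L"
    using LIMSEQ_subseq_LIMSEQ[OF Ls sm] by (simp add: o_def)
  have inv: "(\<lambda>n. inverse (real n)) \<longlonglongrightarrow> 0"
    using LIMSEQ_imp_Suc[OF LIMSEQ_inverse_real_of_nat] .
  have q1: "(\<lambda>n. 1 / (2 + inverse (real n))) \<longlonglongrightarrow> 1 / (2 + 0)"
    by (intro tendsto_intros inv) simp
  have q2: "(\<lambda>n. real n / (2 * real n + 1)) \<longlonglongrightarrow> 1/2"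
  proof (rule Lim_transform_eventually[OF q1[simplified]])
    show "\<forall>\<^sub>F n in sequentially. 1 / (2 + inverse (real n)) = real n / (2 * real n + 1)"
      using eventually_ge_at_top[of "1::nat"]
      by eventually_elim (simp add: field_simps)
  qed
  have q3: "(\<lambda>n. 4 * sdef n - 2 * sdef (2*n) + ln (real n / (2 * real n + 1)) - ln 2)
      \<longlonglongrightarrow> 4 * L - 2 * L + ln (1/2) - ln 2"
    by (intro tendsto_intros Ls L2 q2) simp
  define W where "W n = (\<Prod>k=1..n. 4 * real k ^ 2 / (4 * real k ^ 2 - 1))" for n
  have W: "W \<longlonglongrightarrow> pi/2" unfolding W_def by (rule wallis)
  have lnW: "(\<lambda>n. ln (W n)) \<longlonglongrightarrow> ln (pi/2)" by (rule tendsto_ln[OF W]) simp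
  have lnW2: "(\<lambda>n. ln (W n)) \<longlonglongrightarrow> 4 * L - 2 * L + ln (1/2) - ln 2"
  proof (rule Lim_transform_eventually[OF q3])
    show "\<forall>\<^sub>F n in sequentially. 4 * sdef n - 2 * sdef (2*n) + ln (real n / (2 * real n + 1)) - ln 2 = ln (W n)"
      using eventually_ge_at_top[of "1::nat"]
      by eventually_elim (unfold W_def wallis_eq, rule lnW_eq[symmetric])
  qed
  have "ln (pi/2) = 4 * L - 2 * L + ln (1/2) - ln 2" using LIMSEQ_unique[OF lnW lnW2] .
  moreover have "ln (pi/2) = ln pi - ln 2" by (simp add: ln_div)
  moreover have "ln (1/2::real) = - ln 2" by (simp add: ln_div)
  moreover have "ln (2*pi) = ln 2 + ln pi" by (simp add: ln_mult)
  ultimately have "L = ln (2*pi) / 2" by linarith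
  moreover have "L \<le> sdef n" using L(2)[rule_format, of "n - 1"] assms by simp
  ultimately show ?thesis by simp
qed


lemma exp_sdef:
  assumes "j \<ge> 1"
  shows "exp (sdef j) = fact j * exp (real j) / (real j ^ j * sqrt (real j))"
proof -
  have j0: "real j > 0" using assms by simp
  have "exp ((real j + 1/2) * ln (real j)) = real j powr (real j + 1/2)"
    using j0 by (simp add: powr_def)
  also have "\<dots> = real j ^ j * sqrt (real j)"
    using j0 by (simp add: powr_add powr_realpow powr_half_sqrt)
  finally have e: "exp ((real j + 1/2) * ln (real j)) = real j ^ j * sqrt (real j)" .
  have "exp (sdef j) = exp (ln (fact j)) * exp (real j) / exp ((real j + 1/2) * ln (real j))"
    unfolding sdef_def by (simp add: exp_diff exp_add)
  then show ?thesis unfolding e by simp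
qed

lemma binom_bound:
  assumes "1 \<le> k" "k < n"
  shows "real (n choose k) \<le> real n ^ n * sqrt (real n) /
     (sqrt (2*pi) * (real k ^ k * sqrt (real k)) * (real (n-k) ^ (n-k) * sqrt (real (n-k))))"
proof -
  define m where "m = n - k"
  have m1: "1 \<le> m" "n = k + m" using assms by (auto simp: m_def)
  have n1: "1 \<le> n" using assms by simp
  define A where "A = real n ^ n * sqrt (real n)"
  define B where "B = real k ^ k * sqrt (real k)"
  define D where "D = real m ^ m * sqrt (real m)"
  have Apos: "A > 0" "B > 0" "D > 0" using assms m1 by (auto simp: A_def B_def D_def)
  have h1: "fact n * exp (real n) / A \<le> fact k * exp (real k) / B"
  proof -
    have e: "exp (sdef n) \<le> exp (sdef k)" using sdef_mono[of k n] assms by simp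
    then show ?thesis unfolding A_def B_def exp_sdef[OF n1] exp_sdef[OF assms(1)] .
  qed
  have h2: "sqrt (2*pi) \<le> fact m * exp (real m) / D"
  proof -
    have "exp (ln (2*pi) / 2) \<le> exp (sdef m)" using sdef_ge[OF m1(1)] by simp
    moreover have "exp (ln (2*pi) / 2) = sqrt (2*pi)"
    proof -
      have "(2*pi) powr (1/2) = exp (1/2 * ln (2*pi))" by (simp add: powr_def)
      then show ?thesis using powr_half_sqrt[of "2*pi"] by simp
    qed
    ultimately show ?thesis using exp_sdef[OF m1(1)] unfolding D_def by simp
  qed
  have en: "exp (real n) = exp (real k) * exp (real m)" using m1 by (simp add: exp_add[symmetric])
  have h1': "fact n \<le> fact k * A * exp (real k) / (B * exp (real n))"
    using h1 Apos by (simp add: field_simps)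
  have h2': "sqrt (2*pi) * D \<le> fact m * exp (real m)"
    using h2 Apos by (simp add: field_simps)
  have "real (n choose k) = fact n / (fact k * fact m)"
    using assms by (simp add: binomial_fact m_def)
  also have "\<dots> \<le> (fact k * A * exp (real k) / (B * exp (real n))) / (fact k * fact m)"
    by (intro divide_right_mono h1') simp
  also have "\<dots> = A / (B * fact m * exp (real m))"
    unfolding en by (simp add: field_simps)
  also have "\<dots> \<le> A / (B * (sqrt (2*pi) * D))"
    using h2' Apos by (intro divide_left_mono mult_left_mono) (auto simp: mult.assoc)
  finally show ?thesis unfolding A_def B_def D_def m_def by (simp add: mult_ac)
qed


lemma pow_le_exp:
  fixes z :: real assumes "z \<ge> 0" "k \<ge> 1"
  shows "(z / real k) ^ k \<le> exp (z - real k)"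
proof -
  have k0: "real k > 0" using assms by simp
  have "z / real k \<le> exp (z / real k - 1)" using exp_ge_add_one_self[of "z / real k - 1"] by simp
  then have "(z / real k) ^ k \<le> exp (z / real k - 1) ^ k"
    using assms by (intro power_mono) auto
  also have "\<dots> = exp (real k * (z / real k - 1))" by (simp add: exp_of_nat_mult)
  also have "real k * (z / real k - 1) = z - real k" using k0 by (simp add: field_simps)
  finally show ?thesis .
qed

lemma gibbs:
  fixes \<alpha> :: real
  assumes "\<alpha> > 0" "1 \<le> k" "k < n"
  shows "real n ^ n * \<alpha> ^ k \<le> real k ^ k * real (n-k) ^ (n-k) * (1+\<alpha>) ^ n"
proof -
  define m where "m = n - k"
  have m1: "1 \<le> m" "n = k + m" using assms by (auto simp: m_def)
  define x where "x = real n * \<alpha> / (1+\<alpha>)"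
  define y where "y = real n / (1+\<alpha>)"
  have xy0: "x + y = real n"
  proof -
    have "x + y = (real n * \<alpha> + real n)/(1+\<alpha>)" by (simp add: x_def y_def add_divide_distrib)
    also have "\<dots> = real n * (1+\<alpha>)/(1+\<alpha>)" by (simp add: algebra_simps)
    also have "\<dots> = real n" using assms by simp
    finally show ?thesis .
  qed
  have xy: "x \<ge> 0" "y \<ge> 0" "x + y = real n" using assms xy0
    by (auto simp: x_def y_def)
  have "(x / real k)^k * (y / real m)^m \<le> exp (x - real k) * exp (y - real m)"
    using pow_le_exp[OF xy(1) assms(2)] pow_le_exp[OF xy(2) m1(1)] xy
    by (intro mult_mono) auto
  also have "\<dots> = 1" using xy m1 by (simp add: exp_add[symmetric])
  finally have "x^k * y^m / (real k ^ k * real m ^ m) \<le> 1" by (simp add: power_divide)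
  then have le: "x^k * y^m \<le> real k ^ k * real m ^ m" using m1 assms
    by (simp add: divide_le_eq)
  have xa: "x = \<alpha> * (real n / (1+\<alpha>))" by (simp add: x_def)
  have "x^k * y^m = \<alpha>^k * (real n / (1+\<alpha>))^(k+m)"
  proof -
    have aux: "\<And>z::real. (\<alpha>*z)^k * z^m = \<alpha>^k * z^(k+m)" by (simp add: power_mult_distrib power_add)
    show ?thesis unfolding xa y_def by (rule aux)
  qed
  also have "\<dots> = (real n / (1+\<alpha>))^n * \<alpha>^k" using m1(2) by simp
  also have "\<dots> = real n ^ n * \<alpha> ^ k / (1+\<alpha>)^n" by (simp add: power_divide)
  finally have "real n ^ n * \<alpha> ^ k / (1+\<alpha>)^n \<le> real k ^ k * real m ^ m" using le by simp
  then show ?thesis using assms unfolding m_def by (simp add: divide_le_eq)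
qed

lemma final_aux:
  fixes S P sa d s2 T c :: real
  assumes "S>0" "P>0" "sa>0" "d>0" "s2>0" "T\<ge>0" "S^2 * sa * d \<le> c * P"
  shows "T * S / (s2 * P) \<le> c / sa * (1/d) / s2 * (1/S) * T"
proof -
  have "S / (s2 * P) \<le> c / (sa * d * s2 * S)"
    using assms by (simp add: divide_simps power2_eq_square mult_ac)
  then have "T * (S / (s2 * P)) \<le> T * (c / (sa * d * s2 * S))"
    using assms(6) by (rule mult_left_mono)
  then show ?thesis by (simp add: mult_ac)
qed

theorem proposition11:
  fixes \<alpha> lam :: real and n :: nat
  assumes "\<alpha> > 0" and "0 < lam" and "lam < 1"
    and "int n \<ge> N_bound \<alpha> lam"
  shows "let k = nat \<lfloor>\<alpha> * (real n + 1) / (\<alpha> + 1)\<rfloor> in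
    real (n choose k) * \<alpha> ^ k
      \<le> M_const \<alpha> lam / sqrt (2 * pi) * (real n) powr (-1/2) * (1 + \<alpha>) ^ n"
proof -
  have a0: "\<alpha> > 0" and l0: "lam > 0" and l1: "lam < 1" using assms by auto
  have N1: "\<lfloor>\<alpha> / lam\<rfloor> + 1 \<le> int n" and N2: "\<lfloor>1 / (lam * \<alpha>)\<rfloor> + 1 \<le> int n"
    using assms(4) unfolding N_bound_def by auto
  have "\<alpha> / lam < real_of_int (\<lfloor>\<alpha> / lam\<rfloor> + 1)" by linarith
  also have "\<dots> \<le> real n" using N1 by (metis of_int_le_iff of_int_of_nat_eq)
  finally have n1: "\<alpha> / lam < real n" .
  have "1 / (lam * \<alpha>) < real_of_int (\<lfloor>1 / (lam * \<alpha>)\<rfloor> + 1)" by linarith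
  also have "\<dots> \<le> real n" using N2 by (metis of_int_le_iff of_int_of_nat_eq)
  finally have n2: "1 / (lam * \<alpha>) < real n" .
  have ln1: "\<alpha> < lam * real n" using n1 l0 by (simp add: divide_less_eq mult.commute)
  have ln2: "1 < lam * \<alpha> * real n" using n2 l0 a0 by (simp add: divide_less_eq mult.commute)
  have npos: "real n > 0" using ln1 a0 l0 by (metis mult_pos_pos not_less mult_nonneg_nonpos less_le_trans less_imp_le of_nat_0_le_iff order.strict_iff_not)
  have an1: "\<alpha> * real n > 1"
  proof -
    have "lam * (\<alpha> * real n) \<le> 1 * (\<alpha> * real n)" using l1 a0 npos by (intro mult_right_mono) auto
    then show ?thesis using ln2 by (simp add: mult_ac)
  qed
  have na: "real n > \<alpha>"
  proof -
    have "lam * real n \<le> 1 * real n" using l1 npos by (intro mult_right_mono) auto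
    then show ?thesis using ln1 by simp
  qed
  define y where "y = \<alpha> * (real n + 1) / (\<alpha> + 1)"
  define k where "k = nat \<lfloor>y\<rfloor>"
  have y1: "y > 1" unfolding y_def using an1 a0 by (simp add: field_simps)
  have yn: "y < real n" unfolding y_def using na a0 by (simp add: field_simps)
  have fl: "\<lfloor>y\<rfloor> \<ge> 1" using y1 by linarith
  have kr: "real k = of_int \<lfloor>y\<rfloor>" unfolding k_def using fl by simp
  have k1: "1 \<le> k" using fl unfolding k_def by linarith
  have ky: "real k \<le> y" "y - 1 < real k" using kr by linarith+
  have kn: "k < n" using ky(1) yn by linarith
  define m where "m = n - k"
  have mr: "real m = real n - real k" using kn by (simp add: m_def)
  have kpos: "real k > 0" and mpos: "real m > 0" using k1 kn mr by auto
  have K1: "(\<alpha> + 1) * real k \<ge> \<alpha> * real n * (1 - lam)"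
  proof -
    have "(\<alpha> + 1) * (y - 1) = \<alpha> * real n - 1" unfolding y_def using a0 by (simp add: field_simps)
    moreover have "(\<alpha> + 1) * (y - 1) \<le> (\<alpha> + 1) * real k" using ky a0 by (intro mult_left_mono) auto
    moreover have "\<alpha> * real n * (1 - lam) = \<alpha> * real n - lam * \<alpha> * real n" by (simp add: algebra_simps)
    ultimately show ?thesis using ln2 by linarith
  qed
  have K2: "(\<alpha> + 1) * real m \<ge> real n * (1 - lam)"
  proof -
    have "(\<alpha> + 1) * (real n - y) = real n - \<alpha>" unfolding y_def using a0 by (simp add: field_simps)
    moreover have "(\<alpha> + 1) * (real n - y) \<le> (\<alpha> + 1) * real m" using ky a0 mr by (intro mult_left_mono) auto
    moreover have "real n * (1 - lam) = real n - lam * real n" by (simp add: algebra_simps)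
    ultimately show ?thesis using ln1 by linarith
  qed
  have K: "(real n * (1 - lam))^2 * \<alpha> \<le> ((\<alpha> + 1) * real k) * ((\<alpha> + 1) * real m)"
  proof -
    have "(\<alpha> * real n * (1 - lam)) * (real n * (1 - lam)) \<le> ((\<alpha> + 1) * real k) * ((\<alpha> + 1) * real m)"
      by (rule mult_mono[OF K1 K2]) (use a0 kpos npos l1 in auto)
    then show ?thesis by (simp add: power2_eq_square mult_ac)
  qed
  have Ks: "sqrt (real n)^2 * sqrt \<alpha> * (1 - lam) \<le> (\<alpha> + 1) * (sqrt (real k) * sqrt (real m))"
  proof -
    have "sqrt ((real n * (1 - lam))^2 * \<alpha>) \<le> sqrt (((\<alpha> + 1) * real k) * ((\<alpha> + 1) * real m))"
      using K by (rule real_sqrt_le_mono)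
    moreover have "sqrt ((real n * (1 - lam))^2 * \<alpha>) = real n * (1 - lam) * sqrt \<alpha>"
      using npos l1 by (simp add: real_sqrt_mult)
    moreover have "sqrt (((\<alpha> + 1) * real k) * ((\<alpha> + 1) * real m)) = (\<alpha> + 1) * (sqrt (real k) * sqrt (real m))"
    proof -
      have "((\<alpha> + 1) * real k) * ((\<alpha> + 1) * real m) = (\<alpha> + 1)^2 * (real k * real m)"
        by (simp add: power2_eq_square)
      then have "sqrt (((\<alpha> + 1) * real k) * ((\<alpha> + 1) * real m)) = sqrt ((\<alpha> + 1)^2) * (sqrt (real k) * sqrt (real m))"
        by (simp only: real_sqrt_mult)
      also have "sqrt ((\<alpha> + 1)^2) = \<alpha> + 1" using a0 by simp
      finally show ?thesis .
    qed
    moreover have "sqrt (real n)^2 = real n" using npos by simp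
    ultimately show ?thesis by (metis mult.assoc mult.commute)
  qed
  define s2 where "s2 = sqrt (2 * pi)"
  have s2pos: "s2 > 0" unfolding s2_def by simp
  define D where "D = s2 * (real k ^ k * sqrt (real k)) * (real m ^ m * sqrt (real m))"
  have Dpos: "D > 0" unfolding D_def using s2pos kpos mpos by simp
  have B: "real (n choose k) \<le> real n ^ n * sqrt (real n) / D"
    using binom_bound[OF k1 kn] unfolding D_def s2_def m_def .
  have G: "real n ^ n * \<alpha> ^ k \<le> real k ^ k * real m ^ m * (1+\<alpha>) ^ n"
    using gibbs[OF a0 k1 kn] unfolding m_def .
  have "real (n choose k) * \<alpha> ^ k \<le> real n ^ n * sqrt (real n) / D * \<alpha> ^ k"
    using B a0 by (intro mult_right_mono) auto
  also have "\<dots> = (real n ^ n * \<alpha> ^ k) * sqrt (real n) / D" by simp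
  also have "\<dots> \<le> (real k ^ k * real m ^ m * (1+\<alpha>) ^ n) * sqrt (real n) / D"
    using G Dpos by (intro divide_right_mono mult_right_mono) auto
  also have "\<dots> = (1+\<alpha>) ^ n * sqrt (real n) / (s2 * (sqrt (real k) * sqrt (real m)))"
    unfolding D_def using kpos mpos s2pos by (simp add: field_simps)
  also have "\<dots> \<le> (\<alpha> + 1) / sqrt \<alpha> * (1 / (1 - lam)) / s2 * (1 / sqrt (real n)) * (1+\<alpha>) ^ n"
    using Ks npos kpos mpos a0 l1 s2pos by (intro final_aux) auto
  also have "\<dots> = M_const \<alpha> lam / sqrt (2 * pi) * (real n) powr (-1/2) * (1 + \<alpha>) ^ n"
  proof -
    have "(real n) powr (-1/2) = 1 / sqrt (real n)"
      using npos by (simp add: powr_minus_divide powr_half_sqrt)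
    then show ?thesis unfolding M_const_def s2_def by simp
  qed
  finally have fin: "real (n choose k) * \<alpha> ^ k \<le> M_const \<alpha> lam / sqrt (2 * pi) * (real n) powr (-1/2) * (1 + \<alpha>) ^ n" .
  show ?thesis unfolding Let_def y_def[symmetric] k_def[symmetric] by (rule fin)
qed

end
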